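(* Let $i'$ be an index and $\mathcal B$ a set of $k-m\ge1$ indices not containing $i'$, with $\sigma_h>0$ for all $h\in\{i'\}\cup\mathcal B$ and $\mu_{i'}\ne\mu_j$ for all $j\in\mathcal B$. Then there is exactly one vector $(r_h)_{h\in\{i'\}\cup\mathcal B}$ with all $r_h>0$ and $\sum_h r_h=1$ satisfying $$\frac{(\mu_{i'}-\mu_j)^2}{\sigma_{i'}^2/r_{i'}+\sigma_j^2/r_j}=\frac{(\mu_{i'}-\mu_\ell)^2}{\sigma_{i'}^2/r_{i'}+\sigma_\ell^2/r_\ell}\ \ \forall j,\ell\in\mathcal B,\qquad r_{i'}=\sigma_{i'}\sqrt{\sum_{j\in\mathcal B}r_j^2/\sigma_j^2}.$$
   Context: The $\mu_h\in\mathbb R$ are (true) means and $\sigma_h^2$ (known) variances of normal sampling distributions; $r_h$ are sampling ratios. *)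

theory Defs
  imports "HOL-Analysis.Analysis"
begin

end

theory Submission imports Defs begin

lemma A1: fixes x D c :: real shows "x / D = c \<Longrightarrow> D > 0 \<Longrightarrow> x = c * D"
  by (auto simp: divide_eq_eq)
lemma A2: fixes d c a t b r y :: real shows "d = c*(a/t + b/r) \<Longrightarrow> y = c*a/t \<Longrightarrow> d - y = c*b/r"
  by (simp add: algebra_simps)
lemma A3: fixes D c ssq r t q :: real
  shows "D = c* ssq/r \<Longrightarrow> c>0 \<Longrightarrow> ssq>0 \<Longrightarrow> r>0 \<Longrightarrow> t>0 \<Longrightarrow> q>0 \<Longrightarrow> r = t*(ssq/q)*((c*q/t)/D)"
proof -
  assume h: "D = c* ssq/r" "c>0" "ssq>0" "r>0" "t>0" "q>0"
  then have "D > 0" by simp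
  with h show ?thesis by (simp add: field_simps)
qed
lemma A4: fixes r t ssq q g :: real
  shows "r = t*(ssq/q)*g \<Longrightarrow> ssq>0 \<Longrightarrow> q>0 \<Longrightarrow> r^2/ssq = t^2/q * ((ssq/q) * g^2)"
  by (simp add: field_simps power2_eq_square)
lemma A5: fixes t s0 F :: real
  assumes "t = s0 * sqrt(t^2/s0^2 * F)" "t>0" "s0>0" shows "F = 1"
proof -
  have "sqrt(t^2/s0^2 * F) = t/s0 * sqrt F"
    using assms(2,3) by (simp add: real_sqrt_mult real_sqrt_divide)
  then have "t = t * sqrt F" using assms by simp
  then have "sqrt F = 1" using assms(2) by simp
  then show ?thesis by simp
qed
lemma A6: fixes t S :: real shows "1 = t + t*S \<Longrightarrow> t = 1/(1+S)"
proof -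
  assume h: "1 = t + t*S"
  then have e: "t*(1+S) = 1" by (simp add: algebra_simps)
  then have "1 + S \<noteq> 0" by auto
  with e show ?thesis by (simp add: eq_divide_eq)
qed
lemma A7: fixes q t ssq y d :: real
  assumes "t>0" "y>0" "d-y>0" "ssq>0" "q>0"
  shows "d / (q/t + ssq/(t*(ssq/q)*(y/(d-y)))) = t*y/q"
proof -
  have "q/t + ssq/(t*(ssq/q)*(y/(d-y))) = q*d/(t*y)" using assms by (simp add: field_simps)
  then show ?thesis using assms by simp
qed
lemma A8: fixes t s0 :: real shows "t>0 \<Longrightarrow> s0>0 \<Longrightarrow> s0 * sqrt(t^2/s0^2 * 1) = t"
  by (simp add: real_sqrt_divide)

lemma Fmono:
  fixes d w :: "'a \<Rightarrow> real"
  assumes "finite B" "B \<noteq> {}" "\<And>j. j\<in>B \<Longrightarrow> w j > 0"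
    and "0 \<le> y1" "y1 < y2" "\<And>j. j\<in>B \<Longrightarrow> y2 < d j"
  shows "(\<Sum>j\<in>B. w j * (y1/(d j - y1))^2) < (\<Sum>j\<in>B. w j * (y2/(d j - y2))^2)"
proof (rule sum_strict_mono[OF assms(1,2)])
  fix j assume j: "j \<in> B"
  have d1: "d j - y1 > 0" "d j - y2 > 0" using assms(4,5) assms(6)[OF j] by auto
  have "y1/(d j - y1) < y2/(d j - y2)"
    using d1 assms(4,5) by (simp add: divide_simps) (smt (verit) mult_strict_right_mono mult_left_mono)
  moreover have "0 \<le> y1/(d j - y1)" using d1 assms(4) by simp
  ultimately have "(y1/(d j - y1))^2 < (y2/(d j - y2))^2" by (rule power_strict_mono) auto
  then show "w j * (y1/(d j - y1))^2 < w j * (y2/(d j - y2))^2"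
    using assms(3)[OF j] by simp
qed

lemma Fexists:
  fixes d w :: "'a \<Rightarrow> real"
  assumes "finite B" "B \<noteq> {}" "\<And>j. j\<in>B \<Longrightarrow> w j > 0" "\<And>j. j\<in>B \<Longrightarrow> d j > 0"
  shows "\<exists>y>0. (\<forall>j\<in>B. y < d j) \<and> (\<Sum>j\<in>B. w j * (y/(d j - y))^2) = 1"
proof -
  define F where "F y = (\<Sum>j\<in>B. w j * (y/(d j - y))^2)" for y
  have "Min (d ` B) \<in> d ` B" by (rule Min_in) (use assms(1,2) in auto)
  then obtain jm where jm1: "jm \<in> B" and jmd: "d jm = Min (d ` B)" by auto
  have jm2: "d jm \<le> d j" if "j \<in> B" for j
    unfolding jmd by (rule Min_le) (use assms(1) that in auto)
  define v where "v = w jm"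
  define b where "b = d jm * (v + 1) / (2 * v + 1)"
  have v: "v > 0" using assms(3) jm1 v_def by auto
  have dm: "d jm > 0" using assms(4) jm1 by auto
  have b0: "0 < b" using v dm by (simp add: b_def)
  have db: "d jm - b = d jm * v / (2 * v+1)" using v by (simp add: b_def field_simps)
  have "d jm * v / (2 * v + 1) > 0" using v dm by simp
  then have bd: "b < d jm" using db by linarith
  have bdj: "b < d j" if "j \<in> B" for j using bd jm2[OF that] by simp
  have q: "b/(d jm - b) = (v+1)/v"
  proof -
    have c: "2 * v + 1 \<noteq> 0" using v by simp
    have "b/(d jm - b) = b / (d jm * v / (2 * v + 1))" using db by simp
    also have "... = (d jm * (v + 1)) / (d jm * v)"
      unfolding b_def using c by simp
    also have "... = (v+1)/v" using dm by simp
    finally show ?thesis .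
  qed
  have sq: "(v+1)^2 = v * v + v + (v + 1)" by (simp add: power2_eq_square algebra_simps)
  have "v < (v+1)^2" using v mult_pos_pos[OF v v] sq by linarith
  then have "1 < (v+1)^2/v" using v by (simp add: less_divide_eq)
  also have "(v+1)^2/v = v * ((v+1)/v)^2" using v by (simp add: power2_eq_square)
  also have "... = w jm * (b/(d jm - b))^2" using q v_def by simp
  also have "... \<le> F b" unfolding F_def
    by (rule member_le_sum[OF jm1]) (auto simp: assms(1) intro!: mult_nonneg_nonneg less_imp_le[OF assms(3)])
  finally have Fb: "1 < F b" .
  have F0: "F 0 = 0" by (simp add: F_def)
  have cj: "continuous_on {0..b} (\<lambda>y. w j * (y/(d j - y))^2)" if "j \<in> B" for j
  proof -
    have "\<forall>x\<in>{0..b}. d j - x \<noteq> 0" using bdj[OF that] by auto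
    then show ?thesis by (intro continuous_intros) auto
  qed
  have cont: "continuous_on {0..b} F" unfolding F_def
    by (rule continuous_on_sum) (rule cj)
  obtain y where y: "0 \<le> y" "y \<le> b" "F y = 1"
    using IVT'[of F 0 1 b] F0 Fb cont b0 by auto
  have "y \<noteq> 0" using y F0 by auto
  then have ypos: "y > 0" using y(1) by simp
  have ylt: "\<forall>j\<in>B. y < d j" using y(2) bdj by fastforce
  show ?thesis using ypos ylt y(3) unfolding F_def by blast
qed


theorem proposition3:
  fixes mu sigma :: "'a \<Rightarrow> real" and i' :: 'a and B :: "'a set"
  assumes "finite B" and "B \<noteq> {}" and "i' \<notin> B"
    and "\<And>h. h \<in> insert i' B \<Longrightarrow> sigma h > 0"
    and "\<And>j. j \<in> B \<Longrightarrow> mu i' \<noteq> mu j"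
  shows "\<exists>!r. r \<in> extensional (insert i' B)
           \<and> (\<forall>h\<in>insert i' B. r h > 0)
           \<and> (\<Sum>h\<in>insert i' B. r h) = 1
           \<and> (\<forall>j\<in>B. \<forall>l\<in>B.
                 (mu i' - mu j)\<^sup>2 / ((sigma i')\<^sup>2 / r i' + (sigma j)\<^sup>2 / r j)
               = (mu i' - mu l)\<^sup>2 / ((sigma i')\<^sup>2 / r i' + (sigma l)\<^sup>2 / r l))
           \<and> r i' = sigma i' * sqrt (\<Sum>j\<in>B. (r j)\<^sup>2 / (sigma j)\<^sup>2)"
    (is "\<exists>!r. ?P r")
proof -
  define s0 where "s0 = sigma i'"
  define d where "d j = (mu i' - mu j)^2" for j
  define w where "w j = (sigma j)^2 / s0^2" for j
  define S where "S y = (\<Sum>j\<in>B. w j * (y/(d j - y)))" for y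
  define F where "F y = (\<Sum>j\<in>B. w j * (y/(d j - y))^2)" for y
  define R where "R y = restrict (\<lambda>h. if h = i' then 1/(1+S y) else 1/(1+S y) * w h * (y/(d h - y))) (insert i' B)" for y
  have s0: "s0 > 0" using assms(4) s0_def by auto
  have sj: "sigma j > 0" if "j \<in> B" for j using assms(4) that by auto
  have w0: "w j > 0" if "j \<in> B" for j using sj[OF that] s0 w_def by auto
  have d0: "d j > 0" if "j \<in> B" for j using assms(5)[OF that] d_def by auto
  have backw: "\<exists>y>0. (\<forall>j\<in>B. y < d j) \<and> F y = 1 \<and> r = R y" if P: "?P r" for r
  proof -
    from P have Pext: "r \<in> extensional (insert i' B)" by (elim conjE)
    from P have Ppos: "\<forall>h\<in>insert i' B. r h > 0" by (elim conjE)
    from P have Psum: "(\<Sum>h\<in>insert i' B. r h) = 1" by (elim conjE)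
    from P have ratio: "\<forall>j\<in>B. \<forall>l\<in>B.
                 (mu i' - mu j)\<^sup>2 / ((sigma i')\<^sup>2 / r i' + (sigma j)\<^sup>2 / r j)
               = (mu i' - mu l)\<^sup>2 / ((sigma i')\<^sup>2 / r i' + (sigma l)\<^sup>2 / r l)" by (elim conjE)
    from P have Psq: "r i' = sigma i' * sqrt (\<Sum>j\<in>B. (r j)\<^sup>2 / (sigma j)\<^sup>2)" by (elim conjE)
    define t where "t = r i'"
    have t0: "t > 0" using Ppos t_def by auto
    have rj0: "r j > 0" if "j \<in> B" for j using Ppos that by auto
    obtain j0 where j0: "j0 \<in> B" using assms(2) by auto
    define c where "c = d j0 / (s0^2/t + (sigma j0)^2 / r j0)"
    have den0: "s0^2/t + (sigma j)^2 / r j > 0" if "j \<in> B" for j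
      using t0 rj0[OF that] s0 sj[OF that] by (intro add_pos_pos divide_pos_pos) auto
    have c0: "c > 0" using den0[OF j0] d0[OF j0] c_def by simp
    have ceq: "d j / (s0^2/t + (sigma j)^2 / r j) = c" if "j \<in> B" for j
      unfolding c_def d_def s0_def t_def by (rule ratio[rule_format, OF that j0])
    define y where "y = c * s0^2 / t"
    have y0: "y > 0" using c0 s0 t0 y_def by simp
    have dj: "d j = c * (s0^2/t + (sigma j)^2 / r j)" if "j \<in> B" for j
      using A1[OF ceq[OF that] den0[OF that]] .
    have dy: "d j - y = c * (sigma j)^2 / r j" if "j \<in> B" for j
      using A2[OF dj[OF that] y_def] .
    have ylt: "y < d j" if "j \<in> B" for j
    proof -
      have "c * (sigma j)^2 / r j > 0" using c0 sj[OF that] rj0[OF that] by simp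
      then show ?thesis using dy[OF that] by simp
    qed
    have rj: "r j = t * w j * (y/(d j - y))" if "j \<in> B" for j
    proof -
      have "r j = t*((sigma j)^2/s0^2)*((c* s0^2/t)/(d j - y))"
        by (rule A3[OF dy[OF that] c0]) (use sj[OF that] rj0[OF that] t0 s0 in auto)
      then show ?thesis unfolding w_def y_def .
    qed
    have sumsq: "(\<Sum>j\<in>B. (r j)^2 / (sigma j)^2) = t^2/s0^2 * F y"
      unfolding F_def sum_distrib_left
    proof (rule sum.cong[OF refl])
      fix j assume j: "j \<in> B"
      show "(r j)^2 / (sigma j)^2 = t^2/s0^2 * (w j * (y/(d j - y))^2)"
        using rj[OF j] unfolding w_def by (rule A4) (use sj[OF j] s0 in auto)
    qed
    have "t = s0 * sqrt (t^2/s0^2 * F y)" using Psq sumsq unfolding t_def s0_def by simp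
    then have Fy: "F y = 1" by (rule A5[OF _ t0 s0])
    have sr: "(\<Sum>j\<in>B. r j) = t * S y" unfolding S_def sum_distrib_left
      by (rule sum.cong[OF refl]) (simp add: rj mult.assoc)
    have "1 = t + t * S y" using Psum sr assms(1,3) unfolding t_def by simp
    then have tS: "t = 1/(1 + S y)" by (rule A6)
    have "r = R y"
    proof (rule extensionalityI[OF Pext])
      show "R y \<in> extensional (insert i' B)" unfolding R_def by (rule restrict_extensional)
      fix h assume h: "h \<in> insert i' B"
      show "r h = R y h"
      proof (cases "h = i'")
        case True
        have "R y i' = 1/(1+S y)" unfolding R_def by simp
        then show ?thesis using True tS unfolding t_def by simp
      next
        case False then have hB: "h \<in> B" using h by simp
        have "R y h = 1/(1+S y) * w h * (y/(d h - y))" using hB False unfolding R_def by simp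
        also have "... = r h" unfolding tS[symmetric] by (rule rj[OF hB, symmetric])
        finally show ?thesis by simp
      qed
    qed
    then have "y > 0 \<and> (\<forall>j\<in>B. y < d j) \<and> F y = 1 \<and> r = R y" using y0 ylt Fy by auto
    then show ?thesis by blast
  qed
  have uniq: "y1 = y2" if "y1 > 0" "\<forall>j\<in>B. y1 < d j" "F y1 = 1"
     "y2 > 0" "\<forall>j\<in>B. y2 < d j" "F y2 = 1" for y1 y2
  proof (rule ccontr)
    assume "y1 \<noteq> y2"
    then consider "y1 < y2" | "y2 < y1" by linarith
    then show False
    proof cases
      case 1
      have "F y1 < F y2" unfolding F_def by (rule Fmono[OF assms(1,2)]) (use w0 that 1 in auto)
      with that show ?thesis by simp
    next
      case 2
      have "F y2 < F y1" unfolding F_def by (rule Fmono[OF assms(1,2)]) (use w0 that 2 in auto)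
      with that show ?thesis by simp
    qed
  qed
  obtain y where y: "y > 0" "\<forall>j\<in>B. y < d j" "F y = 1"
    using Fexists[of B w d] assms(1,2) w0 d0 unfolding F_def by blast
  define t where "t = 1/(1 + S y)"
  have gj: "y/(d j - y) > 0" if "j \<in> B" for j using y that by auto
  have S0: "S y \<ge> 0" unfolding S_def
    by (rule sum_nonneg) (use gj w0 in \<open>fastforce intro: mult_nonneg_nonneg less_imp_le\<close>)
  have t0: "t > 0" using S0 t_def by simp
  have Ri: "R y i' = t" using R_def t_def by simp
  have Rj: "R y j = t * w j * (y/(d j - y))" if "j \<in> B" for j
    using that assms(3) R_def t_def by auto
  have PR: "?P (R y)"
  proof (intro conjI ballI)
    show "R y \<in> extensional (insert i' B)" unfolding R_def by (rule restrict_extensional)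
  next
    fix h assume "h \<in> insert i' B"
    then consider "h = i'" | "h \<in> B" by blast
    then show "R y h > 0"
    proof cases
      case 1 then show ?thesis using Ri t0 by simp
    next
      case 2
      have "t * w h * (y/(d h - y)) > 0" using t0 w0[OF 2] gj[OF 2] by (intro mult_pos_pos)
      then show ?thesis using Rj[OF 2] by simp
    qed
  next
    have sr: "(\<Sum>j\<in>B. R y j) = t * S y" unfolding S_def sum_distrib_left
      by (rule sum.cong[OF refl]) (simp add: Rj mult.assoc)
    have "(\<Sum>h\<in>insert i' B. R y h) = t + t * S y" using assms(1,3) Ri sr by simp
    also have "... = t * (1 + S y)" by (simp add: algebra_simps)
    also have "... = 1" using t_def S0 by simp
    finally show "(\<Sum>h\<in>insert i' B. R y h) = 1" .
  next
    have rat: "(mu i' - mu j)\<^sup>2 / ((sigma i')\<^sup>2 / R y i' + (sigma j)\<^sup>2 / R y j) = t * y / s0^2"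
      if j: "j \<in> B" for j
    proof -
      have dy: "d j - y > 0" using y j by auto
      have "(mu i' - mu j)\<^sup>2 / ((sigma i')\<^sup>2 / R y i' + (sigma j)\<^sup>2 / R y j)
          = d j / (s0^2/t + (sigma j)^2/(t*((sigma j)^2/s0^2)*(y/(d j - y))))"
        using Ri Rj[OF j] unfolding d_def w_def s0_def by simp
      also have "... = t*y/s0^2" by (rule A7) (use t0 y(1) dy sj[OF j] s0 in auto)
      finally show ?thesis .
    qed
    fix j l assume "j \<in> B" "l \<in> B"
    then show "(mu i' - mu j)\<^sup>2 / ((sigma i')\<^sup>2 / R y i' + (sigma j)\<^sup>2 / R y j)
             = (mu i' - mu l)\<^sup>2 / ((sigma i')\<^sup>2 / R y i' + (sigma l)\<^sup>2 / R y l)"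
      using rat by simp
  next
    have "(\<Sum>j\<in>B. (R y j)^2 / (sigma j)^2) = t^2/s0^2 * F y"
      unfolding F_def sum_distrib_left
    proof (rule sum.cong[OF refl])
      fix j assume j: "j \<in> B"
      show "(R y j)^2 / (sigma j)^2 = t^2/s0^2 * (w j * (y/(d j - y))^2)"
        using Rj[OF j] unfolding w_def by (rule A4) (use sj[OF j] s0 in auto)
    qed
    then show "R y i' = sigma i' * sqrt (\<Sum>j\<in>B. (R y j)\<^sup>2 / (sigma j)\<^sup>2)"
      using Ri A8[OF t0 s0] y(3) unfolding s0_def by simp
  qed
  show ?thesis
  proof (rule ex1I[of _ "R y"])
    show "?P (R y)" by (rule PR)
  next
    fix r assume "?P r"
    then obtain y' where "y' > 0" "\<forall>j\<in>B. y' < d j" "F y' = 1" "r = R y'" using backw by blast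
    then show "r = R y" using uniq y by metis
  qed
qed

end
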